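(* Let $q>1$. There is no $u\in C^{4}(\mathbb{R}^{2})$, $u>0$, solving $\Delta^{2}u+u^{-q}=0$ in $\mathbb{R}^{2}$ and satisfying $\lim_{|x|\to+\infty}(\ln|x|)^{1/q}u(x)=+\infty$. Consequently, there is no such solution with $\inf_{\mathbb{R}^{2}}u>0$. *)

theory Defs
  imports "HOL-Analysis.Analysis"
begin

text \<open>Functions on the plane are modelled as functions on real \<times> real
  (whose norm is the Euclidean norm).\<close>

definition pd1 :: "(real \<times> real \<Rightarrow> real) \<Rightarrow> real \<times> real \<Rightarrow> real" where
  "pd1 f = (\<lambda>(x, y). deriv (\<lambda>t. f (t, y)) x)"

definition pd2 :: "(real \<times> real \<Rightarrow> real) \<Rightarrow> real \<times> real \<Rightarrow> real" where
  "pd2 f = (\<lambda>(x, y). deriv (\<lambda>t. f (x, t)) y)"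

fun Ck :: "nat \<Rightarrow> (real \<times> real \<Rightarrow> real) \<Rightarrow> bool" where
  "Ck 0 f = continuous_on UNIV f"
| "Ck (Suc k) f =
     ((\<forall>x y. (\<lambda>t. f (t, y)) differentiable (at x)) \<and>
      (\<forall>x y. (\<lambda>t. f (x, t)) differentiable (at y)) \<and>
      Ck k (pd1 f) \<and> Ck k (pd2 f))"

definition laplacian :: "(real \<times> real \<Rightarrow> real) \<Rightarrow> real \<times> real \<Rightarrow> real" where
  "laplacian f = (\<lambda>p. pd1 (pd1 f) p + pd2 (pd2 f) p)"

end

theory Submission
  imports Defs
begin


lemma nonincr:
  fixes f f' :: "real \<Rightarrow> real"
  assumes "a \<le> b" "\<And>x. a \<le> x \<Longrightarrow> x \<le> b \<Longrightarrow> DERIV f x :> f' x"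
    "\<And>x. a \<le> x \<Longrightarrow> x \<le> b \<Longrightarrow> f' x \<le> 0"
  shows "f b \<le> f a"
  using DERIV_nonpos_imp_nonincreasing[of a b f] assms by blast

lemma ode_contra:
  fixes U V pU pV hU hV dU dV W :: "real \<Rightarrow> real"
  assumes U': "\<And>r. DERIV U r :> pU r"
    and hU': "\<And>r. DERIV hU r :> dU r" and hU: "\<And>r. hU r = r * pU r"
    and dU: "\<And>r. r \<noteq> 0 \<Longrightarrow> dU r = r * V r"
    and V': "\<And>r. DERIV V r :> pV r"
    and hV': "\<And>r. DERIV hV r :> dV r" and hV: "\<And>r. hV r = r * pV r"
    and dV: "\<And>r. r \<noteq> 0 \<Longrightarrow> dV r = r * W r"
    and W: "\<And>r. W r < 0" and Upos: "\<And>r. U r > 0"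
  shows False
proof -
  obtain z where z: "0 < z" "z < 1" "hV 1 - hV 0 = (1 - 0) * dV z"
    using MVT2[of 0 1 hV dV] hV' by auto
  have "dV z < 0" using dV[of z] W[of z] z by (simp add: mult_pos_neg)
  moreover have "hV 0 = 0" using hV[of 0] by simp
  ultimately have h1: "hV 1 < 0" using z by simp
  define M where "M = - hV 1"
  have M: "M > 0" using h1 M_def by simp
  have hVle: "hV r \<le> - M" if "r \<ge> 1" for r
  proof -
    have "hV r \<le> hV 1"
    proof (rule nonincr[of 1 r hV dV])
      fix x assume "1 \<le> x" "x \<le> r"
      then show "dV x \<le> 0" using dV[of x] W[of x] by (simp add: mult_pos_neg less_imp_le)
    qed (use that hV' in auto)
    then show ?thesis using M_def by simp
  qed
  have pVle: "pV r \<le> - M / r" if "r \<ge> 1" for r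
    using hVle[OF that] hV[of r] that by (simp add: field_simps)
  have Vle: "V r \<le> V 1 - M * ln r" if "r \<ge> 1" for r
  proof -
    have "V r + M * ln r \<le> V 1 + M * ln 1"
    proof (rule nonincr[of 1 r _ "\<lambda>x. pV x + M / x"])
      fix x assume x: "1 \<le> x" "x \<le> r"
      show "DERIV (\<lambda>x. V x + M * ln x) x :> pV x + M / x"
        using x by (auto intro!: derivative_eq_intros V' simp: field_simps)
      show "pV x + M / x \<le> 0" using pVle[of x] x by simp
    qed (use that in auto)
    then show ?thesis by simp
  qed
  define R where "R = max 1 (exp ((V 1 + 1) / M))"
  have R1: "R \<ge> 1" unfolding R_def by simp
  have Vm1: "V r \<le> -1" if "r \<ge> R" for r
  proof -
    have "exp ((V 1 + 1) / M) \<le> r" using that R_def by simp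
    then have "(V 1 + 1) / M \<le> ln r"
      by (metis exp_gt_zero less_le_trans ln_exp ln_le_cancel_iff)
    then have "V 1 + 1 \<le> M * ln r" using M by (simp add: field_simps)
    then show ?thesis using Vle[of r] that R1 by simp
  qed
  define C where "C = hU R + R^2/2"
  have hUle: "hU r \<le> C - r^2/2" if "r \<ge> R" for r
  proof -
    have "hU r + r^2/2 \<le> hU R + R^2/2"
    proof (rule nonincr[of R r _ "\<lambda>x. dU x + x"])
      fix x assume x: "R \<le> x" "x \<le> r"
      show "DERIV (\<lambda>x. hU x + x^2/2) x :> dU x + x"
        by (auto intro!: derivative_eq_intros hU')
      have "x > 0" using x R1 by simp
      then have "x * V x \<le> x * (-1)" using Vm1[of x] x by (intro mult_left_mono) auto
      then show "dU x + x \<le> 0" using dU[of x] \<open>x > 0\<close> by simp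
    qed (use that in auto)
    then show ?thesis unfolding C_def by simp
  qed
  have pUle: "pU r \<le> C / r - r / 2" if "r \<ge> R" for r
  proof -
    have "r > 0" using that R1 by simp
    have "r * pU r \<le> C - r^2/2" using hUle[OF that] hU[of r] by simp
    then have "pU r \<le> (C - r^2/2) / r" using \<open>r > 0\<close> by (simp add: field_simps)
    also have "\<dots> = C / r - r / 2" using \<open>r > 0\<close> by (simp add: field_simps power2_eq_square)
    finally show ?thesis .
  qed
  define G where "G = U R - C * ln R + R^2/4"
  have Ule: "U r \<le> G + C * ln r - r^2/4" if "r \<ge> R" for r
  proof -
    have "U r - C * ln r + r^2/4 \<le> U R - C * ln R + R^2/4"
    proof (rule nonincr[of R r _ "\<lambda>x. pU x - C / x + x / 2"])
      fix x assume x: "R \<le> x" "x \<le> r"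
      have "x > 0" using x R1 by simp
      then show "DERIV (\<lambda>x. U x - C * ln x + x^2/4) x :> pU x - C / x + x / 2"
        by (auto intro!: derivative_eq_intros U' simp: field_simps)
      show "pU x - C / x + x / 2 \<le> 0" using pUle[of x] x by simp
    qed (use that in auto)
    then show ?thesis unfolding G_def by simp
  qed
  define r where "r = max R (4 * (\<bar>G\<bar> + \<bar>C\<bar> + 1))"
  have rR: "r \<ge> R" and r1: "r \<ge> 1" using R1 by (auto simp: r_def)
  have lnr: "0 \<le> ln r" "ln r \<le> r" using r1 ln_le_minus_one[of r] by auto
  have "C * ln r \<le> \<bar>C\<bar> * r"
  proof -
    have "C * ln r \<le> \<bar>C\<bar> * ln r" using lnr by (simp add: mult_right_mono)
    also have "\<dots> \<le> \<bar>C\<bar> * r" using lnr by (simp add: mult_left_mono)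
    finally show ?thesis .
  qed
  moreover have "r^2/4 \<ge> r * (\<bar>G\<bar> + \<bar>C\<bar> + 1)"
  proof -
    have "r * (4 * (\<bar>G\<bar> + \<bar>C\<bar> + 1)) \<le> r * r" using r1 by (intro mult_left_mono) (auto simp: r_def)
    then show ?thesis by (simp add: power2_eq_square algebra_simps)
  qed
  moreover have "\<bar>G\<bar> \<le> r * \<bar>G\<bar>" using r1 by (simp add: mult_right_mono[of 1 r "\<bar>G\<bar>", simplified])
  ultimately have "G + C * ln r - r^2/4 < 0" using r1 by (simp add: algebra_simps)
  then show False using Ule[OF rR] Upos[of r] by simp
qed



lemma frechet:
  assumes d1: "\<forall>x y. (\<lambda>t. h (t, y)) differentiable (at x)"
    and d2: "\<forall>x y. (\<lambda>t. h (x, t)) differentiable (at y)"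
    and c: "continuous_on UNIV (pd2 h)"
  shows "(h has_derivative (\<lambda>(a, b). a * pd1 h p + b * pd2 h p)) (at p)"
proof -
  obtain x y where p: "p = (x, y)" by (cases p)
  have fx: "((\<lambda>t. h (t, y)) has_derivative (\<lambda>a. a * pd1 h (x, y))) (at x within UNIV)"
    using d1 DERIV_deriv_iff_real_differentiable[of "\<lambda>t. h (t, y)" x]
    unfolding pd1_def has_field_derivative_def
    by (auto elim!: has_derivative_eq_rhs simp: fun_eq_iff)
  have fy: "((\<lambda>t. h (x', t)) has_derivative blinfun_apply (blinfun_mult_right (pd2 h (x', y')))) (at y' within UNIV)"
    for x' y'
    using d2 DERIV_deriv_iff_real_differentiable[of "\<lambda>t. h (x', t)" y']
    unfolding pd2_def has_field_derivative_def
    by (auto elim!: has_derivative_eq_rhs simp: fun_eq_iff)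
  have cc: "continuous (at (x, y) within UNIV \<times> UNIV) (\<lambda>(x', y'). blinfun_mult_right (pd2 h (x', y')))"
  proof -
    have "continuous (at (x,y)) (pd2 h)" using c by (simp add: continuous_on_eq_continuous_at)
    then have "continuous (at (x,y)) (\<lambda>z. blinfun_mult_right (pd2 h z))"
      by (intro continuous_intros)
    then show ?thesis by (simp add: split_beta')
  qed
  have "((\<lambda>(x, y). h (x, y)) has_derivative (\<lambda>(tx, ty). tx * pd1 h (x, y) + blinfun_mult_right (pd2 h (x, y)) ty)) (at (x, y) within UNIV \<times> UNIV)"
    by (rule has_derivative_partialsI[OF fx fy cc]) auto
  then show ?thesis by (simp add: p split_beta' mult.commute)
qed

lemma Ck_cont: "Ck k f \<Longrightarrow> continuous_on UNIV f"
proof (induction k arbitrary: f)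
  case 0 then show ?case by simp
next
  case (Suc k)
  then have "continuous_on UNIV (pd2 f)" by simp
  then have D: "\<And>p. (f has_derivative (\<lambda>(a, b). a * pd1 f p + b * pd2 f p)) (at p)"
    using Suc.prems by (intro frechet) auto
  show ?case
  proof (rule continuous_at_imp_continuous_on, rule ballI)
    fix p show "isCont f p" using has_derivative_continuous[OF D[of p]] .
  qed
qed

lemma Ck_frechet: "Ck (Suc k) h \<Longrightarrow> (h has_derivative (\<lambda>(a, b). a * pd1 h p + b * pd2 h p)) (at p)"
proof -
  assume a: "Ck (Suc k) h"
  then have "continuous_on UNIV (pd2 h)" using Ck_cont[of k "pd2 h"] by simp
  with a show ?thesis by (intro frechet) simp_all
qed

lemma Ck_mono: "Ck (Suc k) f \<Longrightarrow> Ck k f"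
proof (induction k arbitrary: f)
  case 0 then show ?case using Ck_cont[OF 0] by (simp only: Ck.simps)
next
  case (Suc k)
  from Suc.prems have "Ck (Suc k) (pd1 f)" "Ck (Suc k) (pd2 f)" by (simp_all only: Ck.simps(2)[of "Suc k" f] simp_thms)
  with Suc.IH have "Ck k (pd1 f)" "Ck k (pd2 f)" by blast+
  with Suc.prems show ?case by (simp only: Ck.simps(2)[of k f] Ck.simps(2)[of "Suc k" f] simp_thms)
qed

lemma deriv_add_real:
  "(f::real\<Rightarrow>real) differentiable at x \<Longrightarrow> g differentiable at x \<Longrightarrow>
   deriv (\<lambda>t. f t + g t) x = deriv f x + deriv g x"
  by (rule DERIV_imp_deriv) (auto intro!: derivative_intros simp: DERIV_deriv_iff_real_differentiable[symmetric])

lemma pd1_add: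
  assumes "\<forall>x y. (\<lambda>t. f (t, y)) differentiable (at x)" "\<forall>x y. (\<lambda>t. g (t, y)) differentiable (at x)"
  shows "pd1 (\<lambda>p. f p + g p) = (\<lambda>p. pd1 f p + pd1 g p)"
proof
  fix p :: "real \<times> real" obtain a b where p: "p = (a, b)" by (cases p)
  show "pd1 (\<lambda>p. f p + g p) p = pd1 f p + pd1 g p"
    unfolding p pd1_def using deriv_add_real[of "\<lambda>t. f (t, b)" a "\<lambda>t. g (t, b)"] assms by simp
qed

lemma pd2_add:
  assumes "\<forall>x y. (\<lambda>t. f (x, t)) differentiable (at y)" "\<forall>x y. (\<lambda>t. g (x, t)) differentiable (at y)"
  shows "pd2 (\<lambda>p. f p + g p) = (\<lambda>p. pd2 f p + pd2 g p)"
proof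
  fix p :: "real \<times> real" obtain a b where p: "p = (a, b)" by (cases p)
  show "pd2 (\<lambda>p. f p + g p) p = pd2 f p + pd2 g p"
    unfolding p pd2_def using deriv_add_real[of "\<lambda>t. f (a, t)" b "\<lambda>t. g (a, t)"] assms by simp
qed

lemma Ck_add: "Ck k f \<Longrightarrow> Ck k g \<Longrightarrow> Ck k (\<lambda>p. f p + g p)"
proof (induction k arbitrary: f g)
  case 0 then show ?case by (simp add: continuous_on_add)
next
  case (Suc k)
  have a: "\<forall>x y. (\<lambda>t. f (t, y)) differentiable (at x)" "\<forall>x y. (\<lambda>t. g (t, y)) differentiable (at x)"
    "\<forall>x y. (\<lambda>t. f (x, t)) differentiable (at y)" "\<forall>x y. (\<lambda>t. g (x, t)) differentiable (at y)"
    using Suc.prems by simp_all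
  have "Ck k (pd1 (\<lambda>p. f p + g p))" unfolding pd1_add[OF a(1,2)] using Suc by simp
  moreover have "Ck k (pd2 (\<lambda>p. f p + g p))" unfolding pd2_add[OF a(3,4)] using Suc by simp
  moreover have "\<forall>x y. (\<lambda>t. f (t, y) + g (t, y)) differentiable (at x)" using a by (auto intro: differentiable_add)
  moreover have "\<forall>x y. (\<lambda>t. f (x, t) + g (x, t)) differentiable (at y)" using a by (auto intro: differentiable_add)
  ultimately show ?case by simp
qed



lemma chain:
  assumes h: "Ck (Suc k) h"
    and a: "(a has_real_derivative a') (at s within S)"
    and b: "(b has_real_derivative b') (at s within S)"
  shows "((\<lambda>s. h (a s, b s)) has_real_derivative
           (a' * pd1 h (a s, b s) + b' * pd2 h (a s, b s))) (at s within S)"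
proof -
  have p: "((\<lambda>s. (a s, b s)) has_derivative (\<lambda>x. (a' * x, b' * x))) (at s within S)"
    using a b unfolding has_field_derivative_def by (intro has_derivative_Pair)
  have "((\<lambda>s. h (a s, b s)) has_derivative
     (\<lambda>x. (\<lambda>(u, v). u * pd1 h (a s, b s) + v * pd2 h (a s, b s)) (a' * x, b' * x))) (at s within S)"
    by (rule has_derivative_compose[OF p Ck_frechet[OF h]])
  then show ?thesis unfolding has_field_derivative_def
    by (rule has_derivative_eq_rhs) (simp add: fun_eq_iff algebra_simps)
qed

lemma cont_comp:
  assumes "Ck k h" "continuous_on S a" "continuous_on S b"
  shows "continuous_on S (\<lambda>x. h (a x, b x))"
  by (rule continuous_on_compose2[OF Ck_cont[OF assms(1)]]) (auto intro: continuous_on_Pair assms)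



lemma polar_cont2: "Ck k h \<Longrightarrow> continuous_on S (\<lambda>x::real\<times>real. h (fst x * cos (snd x), fst x * sin (snd x)))"
  by (rule cont_comp) (auto intro!: continuous_intros)

lemma polar_cont1: "Ck k h \<Longrightarrow> continuous_on S (\<lambda>t. h (r * cos t, r * sin t))"
  by (rule cont_comp) (auto intro!: continuous_intros)

definition avg :: "(real \<times> real \<Rightarrow> real) \<Rightarrow> real \<Rightarrow> real" where
  "avg g r = integral {0..2*pi} (\<lambda>t. g (r * cos t, r * sin t))"

definition rad :: "(real \<times> real \<Rightarrow> real) \<Rightarrow> real \<Rightarrow> real \<Rightarrow> real" where
  "rad g r t = cos t * pd1 g (r * cos t, r * sin t) + sin t * pd2 g (r * cos t, r * sin t)"

lemma Ck1_parts: "Ck (Suc k) g \<Longrightarrow> Ck k (pd1 g) \<and> Ck k (pd2 g)"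
  by (simp only: Ck.simps(2)[of k g])

lemma rad_cont: "Ck (Suc k) g \<Longrightarrow> continuous_on S (\<lambda>(r, t). rad g r t)"
proof -
  assume g: "Ck (Suc k) g"
  have c1: "continuous_on S (\<lambda>x::real\<times>real. pd1 g (fst x * cos (snd x), fst x * sin (snd x)))"
    using Ck1_parts[OF g] by (intro polar_cont2[of k]) (erule conjunct1)
  have c2: "continuous_on S (\<lambda>x::real\<times>real. pd2 g (fst x * cos (snd x), fst x * sin (snd x)))"
    using Ck1_parts[OF g] by (intro polar_cont2[of k]) (erule conjunct2)
  show ?thesis unfolding rad_def split_beta
    by (intro continuous_intros c1 c2)
qed

lemma rad_cont1: "Ck (Suc k) g \<Longrightarrow> continuous_on S (rad g r)"
proof -
  assume g: "Ck (Suc k) g"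
  have c1: "continuous_on S (\<lambda>t. pd1 g (r * cos t, r * sin t))"
    using Ck1_parts[OF g] by (intro polar_cont1[of k]) (erule conjunct1)
  have c2: "continuous_on S (\<lambda>t. pd2 g (r * cos t, r * sin t))"
    using Ck1_parts[OF g] by (intro polar_cont1[of k]) (erule conjunct2)
  show ?thesis unfolding rad_def
    by (intro continuous_intros c1 c2)
qed

lemma avg_deriv:
  assumes g: "Ck (Suc k) g"
  shows "(avg g has_real_derivative integral {0..2*pi} (rad g r)) (at r)"
proof -
  have "((\<lambda>r. integral (cbox 0 (2*pi)) (\<lambda>t. g (r * cos t, r * sin t))) has_real_derivative
        integral (cbox 0 (2*pi)) (rad g r)) (at r within UNIV)"
  proof (rule leibniz_rule_field_derivative)
    fix x t :: real
    have a: "((\<lambda>r. r * cos t) has_real_derivative cos t) (at x within UNIV)"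
      by (auto intro!: derivative_eq_intros)
    have b: "((\<lambda>r. r * sin t) has_real_derivative sin t) (at x within UNIV)"
      by (auto intro!: derivative_eq_intros)
    show "((\<lambda>r. g (r * cos t, r * sin t)) has_real_derivative rad g x t) (at x within UNIV)"
      using chain[OF g a b] by (simp add: rad_def)
  next
    fix x :: real
    show "(\<lambda>t. g (x * cos t, x * sin t)) integrable_on cbox 0 (2 * pi)"
      by (rule integrable_continuous) (rule polar_cont1[OF g])
  next
    show "continuous_on (UNIV \<times> cbox 0 (2 * pi)) (\<lambda>(x, t). rad g x t)"
      by (rule rad_cont[OF g])
  qed auto
  then show ?thesis unfolding avg_def[abs_def] by simp
qed



definition rad2 :: "(real \<times> real \<Rightarrow> real) \<Rightarrow> real \<Rightarrow> real \<Rightarrow> real" where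
  "rad2 g r t = cos t * (cos t * pd1 (pd1 g) (r * cos t, r * sin t) + sin t * pd2 (pd1 g) (r * cos t, r * sin t))
     + sin t * (cos t * pd1 (pd2 g) (r * cos t, r * sin t) + sin t * pd2 (pd2 g) (r * cos t, r * sin t))"

definition hh :: "(real \<times> real \<Rightarrow> real) \<Rightarrow> real \<Rightarrow> real" where
  "hh g r = integral {0..2*pi} (\<lambda>t. r * rad g r t)"

definition DD :: "(real \<times> real \<Rightarrow> real) \<Rightarrow> real \<Rightarrow> real" where
  "DD g r = integral {0..2*pi} (\<lambda>t. rad g r t + r * rad2 g r t)"

lemma Ck2_parts:
  assumes "Ck (Suc (Suc k)) g"
  shows "Ck (Suc k) (pd1 g)" "Ck (Suc k) (pd2 g)" "Ck k (pd1 (pd1 g))" "Ck k (pd2 (pd1 g))"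
    "Ck k (pd1 (pd2 g))" "Ck k (pd2 (pd2 g))"
  using Ck1_parts[OF assms] Ck1_parts[of k "pd1 g"] Ck1_parts[of k "pd2 g"] by blast+

lemma rad2_cont: "Ck (Suc (Suc k)) g \<Longrightarrow> continuous_on S (\<lambda>(r, t). rad2 g r t)"
proof -
  assume g: "Ck (Suc (Suc k)) g"
  note P = Ck2_parts[OF g]
  have c: "continuous_on S (\<lambda>x::real\<times>real. h (fst x * cos (snd x), fst x * sin (snd x)))"
    if "Ck k h" for h using that by (rule polar_cont2)
  show ?thesis unfolding rad2_def split_beta
    by (intro continuous_intros c P)
qed

lemma rad2_cont1: "Ck (Suc (Suc k)) g \<Longrightarrow> continuous_on S (rad2 g r)"
proof -
  assume g: "Ck (Suc (Suc k)) g"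
  note P = Ck2_parts[OF g]
  have c: "continuous_on S (\<lambda>t. h (r * cos t, r * sin t))"
    if "Ck k h" for h using that by (rule polar_cont1)
  show ?thesis unfolding rad2_def
    by (intro continuous_intros c P)
qed

lemma rad_deriv_r:
  assumes g: "Ck (Suc (Suc k)) g"
  shows "((\<lambda>r. rad g r t) has_real_derivative rad2 g x t) (at x within S)"
proof -
  note P = Ck2_parts[OF g]
  have a: "((\<lambda>r. r * cos t) has_real_derivative cos t) (at x within S)"
    by (auto intro!: derivative_eq_intros)
  have b: "((\<lambda>r. r * sin t) has_real_derivative sin t) (at x within S)"
    by (auto intro!: derivative_eq_intros)
  note d1 = chain[OF P(1) a b] and d2 = chain[OF P(2) a b]
  have "((\<lambda>r. cos t * pd1 g (r * cos t, r * sin t) + sin t * pd2 g (r * cos t, r * sin t)) has_real_derivative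
     cos t * (cos t * pd1 (pd1 g) (x * cos t, x * sin t) + sin t * pd2 (pd1 g) (x * cos t, x * sin t))
     + sin t * (cos t * pd1 (pd2 g) (x * cos t, x * sin t) + sin t * pd2 (pd2 g) (x * cos t, x * sin t))) (at x within S)"
    by (intro DERIV_add DERIV_cmult d1 d2)
  then show ?thesis unfolding rad_def rad2_def .
qed

lemma hh_deriv:
  assumes g: "Ck (Suc (Suc k)) g"
  shows "(hh g has_real_derivative DD g r) (at r)"
proof -
  have "((\<lambda>r. integral (cbox 0 (2*pi)) (\<lambda>t. r * rad g r t)) has_real_derivative
        integral (cbox 0 (2*pi)) (\<lambda>t. rad g r t + r * rad2 g r t)) (at r within UNIV)"
  proof (rule leibniz_rule_field_derivative[where fx = "\<lambda>r t. rad g r t + r * rad2 g r t"])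
    fix x t :: real
    show "((\<lambda>r. r * rad g r t) has_real_derivative rad g x t + x * rad2 g x t) (at x within UNIV)"
      using rad_deriv_r[OF g, of t x UNIV]
      by (auto intro!: derivative_eq_intros)
  next
    fix x :: real
    have "continuous_on (cbox 0 (2 * pi)) (\<lambda>t. x * rad g x t)"
      using rad_cont1[OF g, of _ x] by (intro continuous_intros) auto
    then show "(\<lambda>t. x * rad g x t) integrable_on cbox 0 (2 * pi)"
      by (rule integrable_continuous)
  next
    have "continuous_on (UNIV \<times> cbox 0 (2 * pi)) (\<lambda>x. rad g (fst x) (snd x) + fst x * rad2 g (fst x) (snd x))"
      using rad_cont[OF g] rad2_cont[OF g] unfolding split_beta
      by (intro continuous_intros) auto
    then show "continuous_on (UNIV \<times> cbox 0 (2 * pi)) (\<lambda>(x, t). rad g x t + x * rad2 g x t)"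
      by (simp add: split_beta)
  qed auto
  then show ?thesis unfolding hh_def[abs_def] DD_def by simp
qed



lemma ident:
  fixes r s c X Y A B C D :: real
  assumes "s^2 + c^2 = 1"
  shows "r * ((c * X + s * Y) + r * (c * (c * A + s * B) + s * (c * C + s * D)))
     + (- r * c * X - r * s * (- r * s * A + r * c * B) - r * s * Y + r * c * (- r * s * C + r * c * D))
     = r^2 * (A + D)"
  using assms by algebra

lemma DD_eq:
  assumes g: "Ck (Suc (Suc k)) g"
  shows "r * DD g r = r^2 * avg (laplacian g) r"
proof -
  note P = Ck2_parts[OF g]
  define w where "w t = - r * sin t * pd1 g (r * cos t, r * sin t) + r * cos t * pd2 g (r * cos t, r * sin t)" for t
  define w' where "w' t = - r * cos t * pd1 g (r * cos t, r * sin t)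
     - r * sin t * (- r * sin t * pd1 (pd1 g) (r * cos t, r * sin t) + r * cos t * pd2 (pd1 g) (r * cos t, r * sin t))
     - r * sin t * pd2 g (r * cos t, r * sin t)
     + r * cos t * (- r * sin t * pd1 (pd2 g) (r * cos t, r * sin t) + r * cos t * pd2 (pd2 g) (r * cos t, r * sin t))" for t
  have wd: "(w has_real_derivative w' t) (at t within S)" for t S
  proof -
    have a: "((\<lambda>t. r * cos t) has_real_derivative - r * sin t) (at t within S)"
      by (auto intro!: derivative_eq_intros)
    have b: "((\<lambda>t. r * sin t) has_real_derivative r * cos t) (at t within S)"
      by (auto intro!: derivative_eq_intros)
    note d1 = chain[OF P(1) a b] and d2 = chain[OF P(2) a b]
    have s: "((\<lambda>t. - r * sin t) has_real_derivative - r * cos t) (at t within S)"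
      by (auto intro!: derivative_eq_intros)
    have c: "((\<lambda>t. r * cos t) has_real_derivative - r * sin t) (at t within S)"
      by (auto intro!: derivative_eq_intros)
    note DERIV_add[OF DERIV_mult'[OF s d1] DERIV_mult'[OF c d2]]
    then show ?thesis unfolding w_def[abs_def] by (rule DERIV_cong) (simp add: w'_def algebra_simps)
  qed
  have "(w' has_integral (w (2*pi) - w 0)) {0..2*pi}"
    by (rule fundamental_theorem_of_calculus) (auto simp: has_real_derivative_iff_has_vector_derivative[symmetric] intro: wd)
  then have I2: "(w' has_integral 0) {0..2*pi}" by (simp add: w_def)
  define F where "F t = rad g r t + r * rad2 g r t" for t
  have Fc: "continuous_on {0..2*pi} F"
    unfolding F_def using rad_cont1[OF g] rad2_cont1[OF g] by (intro continuous_intros) auto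
  have I1: "((\<lambda>t. r * F t) has_integral r * DD g r) {0..2*pi}"
    unfolding DD_def F_def[symmetric]
    by (intro has_integral_mult_right integrable_integral integrable_continuous_real Fc)
  have I: "((\<lambda>t. r * F t + w' t) has_integral r * DD g r) {0..2*pi}"
    using has_integral_add[OF I1 I2] by simp
  have eq: "r * F t + w' t = r^2 * laplacian g (r * cos t, r * sin t)" for t
    unfolding F_def w'_def rad_def rad2_def laplacian_def
    by (rule ident) (simp add: sin_cos_squared_add)
  have "((\<lambda>t. r^2 * laplacian g (r * cos t, r * sin t)) has_integral r * DD g r) {0..2*pi}"
    using I unfolding eq .
  then have "r * DD g r = integral {0..2*pi} (\<lambda>t. r^2 * laplacian g (r * cos t, r * sin t))"
    by (rule integral_unique[symmetric])
  also have "\<dots> = r^2 * avg (laplacian g) r" unfolding avg_def by (rule integral_mult_right)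
  finally show ?thesis .
qed

lemma hh_eq: "hh g r = r * integral {0..2*pi} (rad g r)"
  unfolding hh_def by simp



lemma int_pos:
  fixes f :: "real \<Rightarrow> real"
  assumes c: "continuous_on {a..b} f" and ab: "a < b" and p: "\<And>x. f x > 0"
  shows "integral {a..b} f > 0"
proof -
  obtain x where x: "x \<in> {a..b}" "\<And>y. y \<in> {a..b} \<Longrightarrow> f x \<le> f y"
    using continuous_attains_inf[OF compact_Icc _ c] ab by auto
  have "integral {a..b} (\<lambda>_. f x) \<le> integral {a..b} f"
    by (rule integral_le) (auto intro: integrable_continuous_real c x)
  moreover have "integral {a..b} (\<lambda>_. f x) = (b - a) * f x" using ab by simp
  moreover have "(b - a) * f x > 0" using ab p[of x] by simp
  ultimately show ?thesis by linarith
qed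

lemma avg_pos: "Ck k g \<Longrightarrow> (\<And>x. g x > 0) \<Longrightarrow> avg g r > 0"
  unfolding avg_def by (rule int_pos) (auto intro: polar_cont1)

lemma avg_neg: "Ck k g \<Longrightarrow> (\<And>x. g x < 0) \<Longrightarrow> avg g r < 0"
proof -
  assume g: "Ck k g" and n: "\<And>x. g x < 0"
  have "integral {0..2*pi} (\<lambda>t. - g (r * cos t, r * sin t)) > 0"
    by (rule int_pos) (auto intro!: continuous_intros polar_cont1[OF g] n)
  then show ?thesis unfolding avg_def by simp
qed

lemma no_solution:
  fixes q :: real
  assumes u4: "Ck 4 u" and pos: "\<And>x. u x > 0"
    and eq: "\<And>x. laplacian (laplacian u) x + u x powr (- q) = 0"
  shows False
proof -
  define v where "v = laplacian u"
  have u4': "Ck (Suc (Suc (Suc (Suc 0)))) u" using u4 by (simp add: numeral_eq_Suc del: Ck.simps)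
  have u2: "Ck (Suc (Suc 0)) u" using Ck_mono[OF Ck_mono[OF u4']] .
  have "Ck (Suc (Suc 0)) (pd1 (pd1 u))" "Ck (Suc (Suc 0)) (pd2 (pd2 u))"
    using Ck2_parts[OF u4'] by blast+
  then have v2: "Ck (Suc (Suc 0)) v" unfolding v_def laplacian_def by (rule Ck_add)
  have "Ck 0 (pd1 (pd1 v))" "Ck 0 (pd2 (pd2 v))" using Ck2_parts[OF v2] by blast+
  then have lv: "Ck 0 (laplacian v)" unfolding laplacian_def by (rule Ck_add)
  have lvneg: "laplacian v x < 0" for x
  proof -
    have "u x powr (- q) > 0" using pos[of x] by simp
    then show ?thesis using eq[of x] unfolding v_def by linarith
  qed
  show False
  proof (rule ode_contra[where U = "avg u" and pU = "\<lambda>r. integral {0..2*pi} (rad u r)"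
        and hU = "hh u" and dU = "DD u" and V = "avg v" and pV = "\<lambda>r. integral {0..2*pi} (rad v r)"
        and hV = "hh v" and dV = "DD v" and W = "avg (laplacian v)"])
    show "DERIV (avg u) r :> integral {0..2 * pi} (rad u r)" for r by (rule avg_deriv[OF u2])
    show "DERIV (hh u) r :> DD u r" for r by (rule hh_deriv[OF u2])
    show "hh u r = r * integral {0..2 * pi} (rad u r)" for r by (rule hh_eq)
    show "DD u r = r * avg v r" if "r \<noteq> 0" for r
    proof -
      have "r * DD u r = r * (r * avg v r)" using DD_eq[OF u2, of r] by (simp add: v_def power2_eq_square)
      then show ?thesis using that by simp
    qed
    show "DERIV (avg v) r :> integral {0..2 * pi} (rad v r)" for r by (rule avg_deriv[OF v2])
    show "DERIV (hh v) r :> DD v r" for r by (rule hh_deriv[OF v2])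
    show "hh v r = r * integral {0..2 * pi} (rad v r)" for r by (rule hh_eq)
    show "DD v r = r * avg (laplacian v) r" if "r \<noteq> 0" for r
    proof -
      have "r * DD v r = r * (r * avg (laplacian v) r)" using DD_eq[OF v2, of r] by (simp add: power2_eq_square)
      then show ?thesis using that by simp
    qed
    show "avg (laplacian v) r < 0" for r by (rule avg_neg[OF lv lvneg])
    show "avg u r > 0" for r by (rule avg_pos[OF u4 pos])
  qed
qed


theorem mainTheorem17:
  fixes q :: real
  assumes "q > 1"
  shows "\<not> (\<exists>u :: real \<times> real \<Rightarrow> real. Ck 4 u \<and> (\<forall>x. u x > 0) \<and>
              (\<forall>x. laplacian (laplacian u) x + u x powr (- q) = 0) \<and>
              filterlim (\<lambda>x. ln (norm x) powr (1 / q) * u x) at_top at_infinity)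
       \<and> \<not> (\<exists>u :: real \<times> real \<Rightarrow> real. Ck 4 u \<and> (\<forall>x. u x > 0) \<and>
              (\<forall>x. laplacian (laplacian u) x + u x powr (- q) = 0) \<and>
              (INF x. u x) > 0)"
  using no_solution[of _ q] by blast

end
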